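(* Let $\phi=\frac{1+\sqrt5}{2}$ and let $\Gamma\subset SL_2(\mathbb R)$ be the group generated by $$\sigma_0=\begin{pmatrix}1&\phi\\0&1\end{pmatrix},\quad \sigma_1=\begin{pmatrix}\phi&\phi\\1&\phi\end{pmatrix},\quad \sigma_2=\begin{pmatrix}\phi&1\\\phi&\phi\end{pmatrix},\quad \sigma_3=\begin{pmatrix}1&0\\\phi&1\end{pmatrix}.$$ Let $S=\{\gamma\binom{1}{0}:\gamma\in\Gamma\}\subset\mathbb R^2$. There exist a sequence of positive numbers $\epsilon_n\to 0$ and a constant $C>0$ such that for every $n$ there are three distinct points of $S$ lying on a horizontal line segment of length $\epsilon_n$, and these three points lie in the ball centered at the origin of radius $C\epsilon_n^{-4}$.
   Context: A horizontal line segment is a segment contained in a line $\{y=c\}$ in $\mathbb R^2$. Balls are with respect to the Euclidean norm. $\Gamma$ acts on $\mathbb R^2$ by matrix multiplication on column vectors. *)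

theory Defs
  imports "HOL-Analysis.Analysis"
begin

definition phi :: real where "phi = (1 + sqrt 5) / 2"

definition sigma0 :: "real^2^2" where "sigma0 = vector [vector [1, phi], vector [0, 1]]"
definition sigma1 :: "real^2^2" where "sigma1 = vector [vector [phi, phi], vector [1, phi]]"
definition sigma2 :: "real^2^2" where "sigma2 = vector [vector [phi, 1], vector [phi, phi]]"
definition sigma3 :: "real^2^2" where "sigma3 = vector [vector [1, 0], vector [phi, 1]]"

definition generators :: "(real^2^2) set" where
  "generators = {sigma0, sigma1, sigma2, sigma3}"

inductive_set Gamma :: "(real^2^2) set" where
  one: "mat 1 \<in> Gamma"
| mult: "g \<in> Gamma \<Longrightarrow> s \<in> generators \<Longrightarrow> g ** s \<in> Gamma"
| mult_inv: "g \<in> Gamma \<Longrightarrow> s \<in> generators \<Longrightarrow> g ** matrix_inv s \<in> Gamma"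

definition orbitS :: "(real^2) set" where
  "orbitS = {\<gamma> *v vector [1, 0] | \<gamma>. \<gamma> \<in> Gamma}"

end

theory Submission
  imports Defs
begin

definition mk :: "real \<Rightarrow> real \<Rightarrow> real \<Rightarrow> real \<Rightarrow> real^2^2" where
  "mk a b c d = vector [vector [a,b], vector [c,d]]"

lemma mk_nth: "mk a b c d $ 1 $ 1 = a" "mk a b c d $ 1 $ 2 = b" "mk a b c d $ 2 $ 1 = c" "mk a b c d $ 2 $ 2 = d"
  by (simp_all add: mk_def)

lemma mk_mult: "mk a b c d ** mk a' b' c' d' = mk (a*a'+b*c') (a*b'+b*d') (c*a'+d*c') (c*b'+d*d')"
  by (simp add: vec_eq_iff forall_2 matrix_matrix_mult_def sum_2 mk_nth)

lemma mk_mulv: "mk a b c d *v vector [x,y] = (vector [a*x+b*y, c*x+d*y] :: real^2)"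
  by (simp add: vec_eq_iff forall_2 matrix_vector_mult_def sum_2 mk_nth)

lemma mat1_mk: "mat 1 = mk 1 0 0 1"
  by (simp add: vec_eq_iff forall_2 mat_def mk_nth)

lemma phi_sq: "phi^2 = phi + 1"
  unfolding phi_def by (simp add: power2_eq_square field_simps) 

lemma Gamma_mult: assumes "h \<in> Gamma" shows "g \<in> Gamma \<Longrightarrow> g ** h \<in> Gamma"
  using assms
proof (induction h rule: Gamma.induct)
  case one then show ?case by simp
next
  case (mult h s) then show ?case by (metis Gamma.mult matrix_mul_assoc)
next
  case (mult_inv h s) then show ?case by (metis Gamma.mult_inv matrix_mul_assoc)
qed

lemma gen_in: "s \<in> generators \<Longrightarrow> s \<in> Gamma"
  using Gamma.mult[OF Gamma.one] by (metis matrix_mul_lid)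

lemma gen_inv_in: "s \<in> generators \<Longrightarrow> matrix_inv s \<in> Gamma"
  using Gamma.mult_inv[OF Gamma.one] by (metis matrix_mul_lid)

lemma matrix_inv_eq:
  fixes A B :: "real^2^2"
  assumes "A ** B = mat 1" "B ** A = mat 1"
  shows "matrix_inv A = B"
proof -
  have ex: "\<exists>A'. A ** A' = mat 1 \<and> A' ** A = mat 1" using assms by blast
  define C where "C = matrix_inv A"
  have C: "A ** C = mat 1 \<and> C ** A = mat 1"
    unfolding C_def matrix_inv_def by (rule someI_ex[OF ex])
  have "C = C ** (A ** B)" by (simp add: assms)
  also have "\<dots> = (C ** A) ** B" by (simp add: matrix_mul_assoc)
  also have "\<dots> = B" using C by simp
  finally show ?thesis unfolding C_def .
qed

definition T :: "real \<Rightarrow> real^2^2" where "T t = mk 1 t 0 1"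
definition Lo :: "real \<Rightarrow> real^2^2" where "Lo t = mk 1 0 t 1"
definition Sm :: "real^2^2" where "Sm = mk 0 (-1) 1 0"
definition Sp :: "real^2^2" where "Sp = mk 0 1 (-1) 0"

lemma sigma0_T: "sigma0 = T phi" by (simp add: sigma0_def T_def mk_def)
lemma sigma3_Lo: "sigma3 = Lo phi" by (simp add: sigma3_def Lo_def mk_def)
lemma sigma1_mk: "sigma1 = mk phi phi 1 phi" by (simp add: sigma1_def mk_def)

lemma T_add: "T a ** T b = T (a + b)" by (simp add: T_def mk_mult add.commute)
lemma Lo_add: "Lo a ** Lo b = Lo (a + b)" by (simp add: Lo_def mk_mult add.commute)
lemma T0: "T 0 = mat 1" by (simp add: T_def mat1_mk)
lemma Lo0: "Lo 0 = mat 1" by (simp add: Lo_def mat1_mk)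

lemma inv_sigma0: "matrix_inv sigma0 = T (-phi)"
  by (rule matrix_inv_eq) (simp_all add: sigma0_T T_add T0)
lemma inv_sigma3: "matrix_inv sigma3 = Lo (-phi)"
  by (rule matrix_inv_eq) (simp_all add: sigma3_Lo Lo_add Lo0)

lemma T_in: "T (of_int n * phi) \<in> Gamma"
proof (induction n rule: int_induct[where k=0])
  case base then show ?case by (simp add: T0 Gamma.one)
next
  case (step1 i)
  have "T (of_int (i+1) * phi) = T (of_int i * phi) ** sigma0"
    by (simp add: sigma0_T T_add distrib_right)
  then show ?case using step1 Gamma.mult[of _ sigma0] by (simp add: generators_def)
next
  case (step2 i)
  have "T (of_int (i-1) * phi) = T (of_int i * phi) ** matrix_inv sigma0"
    by (simp add: inv_sigma0 T_add left_diff_distrib)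
  then show ?case using step2 Gamma.mult_inv[of _ sigma0] by (simp add: generators_def)
qed

lemma Lo_in: "Lo (of_int n * phi) \<in> Gamma"
proof (induction n rule: int_induct[where k=0])
  case base then show ?case by (simp add: Lo0 Gamma.one)
next
  case (step1 i)
  have "Lo (of_int (i+1) * phi) = Lo (of_int i * phi) ** sigma3"
    by (simp add: sigma3_Lo Lo_add distrib_right)
  then show ?case using step1 Gamma.mult[of _ sigma3] by (simp add: generators_def)
next
  case (step2 i)
  have "Lo (of_int (i-1) * phi) = Lo (of_int i * phi) ** matrix_inv sigma3"
    by (simp add: inv_sigma3 Lo_add left_diff_distrib)
  then show ?case using step2 Gamma.mult_inv[of _ sigma3] by (simp add: generators_def)
qed

lemma phi_sq': "phi * phi = phi + 1" using phi_sq by (simp add: power2_eq_square)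

lemma Sm_in: "Sm \<in> Gamma"
proof -
  have "Sm = T (-phi) ** sigma1 ** T (-phi)"
    by (simp add: Sm_def T_def sigma1_mk mk_mult algebra_simps phi_sq')
  moreover have "T (-phi) \<in> Gamma" using T_in[of "-1"] by simp
  moreover have "sigma1 \<in> Gamma" by (simp add: gen_in generators_def)
  ultimately show ?thesis by (metis Gamma_mult)
qed

lemma Sp_in: "Sp \<in> Gamma"
proof -
  have "Sp = Sm ** Sm ** Sm" by (simp add: Sm_def Sp_def mk_mult)
  then show ?thesis using Sm_in Gamma_mult by metis
qed

definition psi :: real where "psi = 1 - phi"

lemma phi_psi: "phi * psi = -1" unfolding psi_def using phi_sq' by (simp add: algebra_simps)
lemma psi_sq': "psi * psi = psi + 1" unfolding psi_def using phi_sq' by (simp add: algebra_simps)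
lemma phi_gt1: "phi > 1" unfolding phi_def
proof -
  have "sqrt 5 > 1" by simp
  then show "(1 + sqrt 5) / 2 > 1" by simp
qed

fun fb :: "nat \<Rightarrow> nat" where
  "fb 0 = 0" | "fb (Suc 0) = 1" | "fb (Suc (Suc n)) = fb n + fb (Suc n)"

fun luc :: "nat \<Rightarrow> nat" where
  "luc 0 = 2" | "luc (Suc 0) = 1" | "luc (Suc (Suc n)) = luc n + luc (Suc n)"

lemma fb_closed: "(2*phi - 1) * real (fb n) = phi^n - psi^n"
proof (induction n rule: fb.induct)
  case 1 then show ?case by simp
next
  case 2 then show ?case by (simp add: psi_def)
next
  case (3 n)
  have "phi^(Suc (Suc n)) = phi^n * (phi*phi)" "psi^(Suc (Suc n)) = psi^n * (psi*psi)"
    by (simp_all add: algebra_simps)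
  then have "phi^(Suc (Suc n)) - psi^(Suc (Suc n)) = (phi^n - psi^n) + (phi^(Suc n) - psi^(Suc n))"
    by (simp add: phi_sq' psi_sq' algebra_simps)
  then show ?case using 3 by (simp add: algebra_simps)
qed

lemma luc_closed: "real (luc n) = phi^n + psi^n"
proof (induction n rule: luc.induct)
  case 1 then show ?case by simp
next
  case 2 then show ?case by (simp add: psi_def)
next
  case (3 n)
  have "phi^(Suc (Suc n)) = phi^n * (phi*phi)" "psi^(Suc (Suc n)) = psi^n * (psi*psi)"
    by (simp_all add: algebra_simps)
  then have "phi^(Suc (Suc n)) + psi^(Suc (Suc n)) = (phi^n + psi^n) + (phi^(Suc n) + psi^(Suc n))"
    by (simp add: phi_sq' psi_sq' algebra_simps)
  then show ?case using 3 by (simp add: algebra_simps)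
qed

fun Wp :: "nat \<Rightarrow> real \<Rightarrow> real^2^2" where
  "Wp 0 s = mk 0 s (-s) 0 ** T (-s*phi) ** mk 0 s (-s) 0 ** T (-s*phi)"
| "Wp (Suc i) s = Wp i (-s) ** mk 0 s (-s) 0 ** T (-s * real (luc (2*i+1)) * phi)"

lemma mkS_in: "s = 1 \<or> s = -1 \<Longrightarrow> mk 0 s (-s) 0 \<in> Gamma"
  using Sp_in Sm_in unfolding Sp_def Sm_def by auto

lemma Tl_in: "s = 1 \<or> s = -1 \<Longrightarrow> T (-s * real m * phi) \<in> Gamma"
proof -
  assume "s = 1 \<or> s = -1"
  then have "-s * real m * phi = of_int (if s = 1 then - int m else int m) * phi" by auto
  then show ?thesis using T_in by metis
qed

lemma Wp_in: "s = 1 \<or> s = -1 \<Longrightarrow> Wp i s \<in> Gamma"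
proof (induction i arbitrary: s)
  case 0
  have "T (-s*phi) \<in> Gamma" using Tl_in[OF 0, of 1] by simp
  then show ?case using mkS_in[OF 0] by (simp add: Gamma_mult)
next
  case (Suc i)
  have "-s = 1 \<or> -s = -1" using Suc.prems by auto
  then have "Wp i (-s) \<in> Gamma" using Suc.IH by blast
  then show ?case using mkS_in[OF Suc.prems] Tl_in[OF Suc.prems] by (simp add: Gamma_mult)
qed

definition N :: "nat \<Rightarrow> real" where "N i = phi^(i*i+i+1)"
definition Q :: "nat \<Rightarrow> real" where "Q i = psi^(2*i)"

lemma PQ: "phi^(2*i) * Q i = 1"
proof -
  have "phi^(2*i) * psi^(2*i) = (phi*psi)^(2*i)" by (simp add: power_mult_distrib)
  also have "\<dots> = 1" by (simp add: phi_psi power_mult)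
  finally show ?thesis by (simp add: Q_def)
qed

lemma N_Suc: "N (Suc i) = N i * (phi*phi) * phi^(2*i)"
proof -
  have "Suc i * Suc i + Suc i + 1 = (i*i+i+1) + 2 + 2*i" by simp
  then show ?thesis unfolding N_def by (simp only: power_add) (simp add: power2_eq_square algebra_simps)
qed

lemma Q_Suc: "Q (Suc i) = Q i * (psi*psi)"
  unfolding Q_def by (simp add: algebra_simps)

lemma luc_odd: "real (luc (2*i+1)) = phi * phi^(2*i) + psi * Q i"
  by (simp add: luc_closed Q_def)

lemma T_mulv: "T t *v vector [x,y] = vector [x + t*y, y]" by (simp add: T_def mk_mulv)

lemma Wp_key: "s * s = 1 \<Longrightarrow> Wp i s *v vector [N i, s * N i * Q i] = vector [1, 0]"
proof (induction i arbitrary: s)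
  case 0
  have "Wp 0 s *v vector [N 0, s * N 0 * Q 0] = vector [1,0]"
    using 0 by (simp add: matrix_vector_mul_assoc[symmetric] mk_mulv T_mulv N_def Q_def algebra_simps phi_sq')
  then show ?case .
next
  case (Suc i)
  define P where "P = phi^(2*i)"
  have PQ': "P * Q i = 1" using PQ P_def by simp
  have ss: "(-s)*(-s) = 1" using Suc.prems by simp
  let ?L = "real (luc (2*i+1))"
  have L: "?L = phi * P + psi * Q i" using luc_odd P_def by simp
  have "Wp (Suc i) s *v vector [N (Suc i), s * N (Suc i) * Q (Suc i)]
      = Wp i (-s) *v (mk 0 s (-s) 0 *v (T (-s * ?L * phi) *v vector [N (Suc i), s * N (Suc i) * Q (Suc i)]))"
    by (simp add: matrix_vector_mul_assoc matrix_mul_assoc)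
  also have "mk 0 s (-s) 0 *v (T (-s * ?L * phi) *v vector [N (Suc i), s * N (Suc i) * Q (Suc i)])
      = vector [N i, (-s) * N i * Q i]"
  proof -
    have e1: "s * (s * N (Suc i) * Q (Suc i)) = N i"
      unfolding N_Suc Q_Suc P_def[symmetric]
      using Suc.prems PQ' phi_psi by algebra
    have L2: "real (luc (Suc (2*i))) = phi * P + psi * Q i" using L by simp
    have e2: "N (Suc i) - s * real (luc (Suc (2*i))) * phi * (s * N (Suc i) * Q (Suc i)) = N i * Q i"
      unfolding N_Suc Q_Suc P_def[symmetric] L2
      using Suc.prems PQ' phi_psi by algebra
    show ?thesis by (simp add: T_mulv mk_mulv e1 e2) (simp add: mult.assoc)
  qed
  also have "Wp i (-s) *v vector [N i, (-s) * N i * Q i] = vector [1,0]" using Suc.IH[OF ss] .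
  finally show ?case .
qed

declare fb.simps(3)[simp del] luc.simps(3)[simp del]

lemma gen_mulv: "(M::real^2^2) *v vector [x,y] = vector [M$1$1*x + M$1$2*y, M$2$1*x + M$2$2*y]"
  by (simp add: vec_eq_iff forall_2 matrix_vector_mult_def sum_2)

definition A0 :: "nat \<Rightarrow> real^2" where "A0 i = vector [1, (1 - real (fb (2*i+3))) * phi]"
definition A1 :: "nat \<Rightarrow> real^2" where "A1 i = vector [phi, phi - real (fb (2*i+2)) * (phi + 1)]"
definition A2 :: "nat \<Rightarrow> real^2" where "A2 i = vector [1 + 2*phi, phi - real (fb (2*i)) * (3*phi + 2)]"

lemma e1_def': "vector [1, 0] = (vector [1,0] :: real^2)" ..

lemma A0_word: "A0 i = Lo (of_int (1 - int (fb (2*i+3))) * phi) *v vector [1,0]"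
  by (simp add: A0_def Lo_def mk_mulv)

lemma A1_word_gen: "vector [phi, phi - real m * (phi + 1)] = (Sp ** T (of_int (int m - 1) * phi) ** Lo phi) *v vector [1,0]"
proof -
  have "(Sp ** T (of_int (int m - 1) * phi) ** Lo phi) *v vector [1,0] = vector [phi, -1 - (real m - 1) * phi * phi]"
    by (simp add: Lo_def T_def Sp_def mk_mult mk_mulv)
  also have "-1 - (real m - 1) * phi * phi = phi - real m * (phi + 1)" using phi_sq' by algebra
  finally show ?thesis by simp
qed

lemma A1_word: "A1 i = (Sp ** T (of_int (int (fb (2*i+2)) - 1) * phi) ** Lo phi) *v vector [1,0]"
  unfolding A1_def by (rule A1_word_gen)

lemma A2_word_gen: "vector [1 + 2*phi, phi - real m * (3*phi + 2)] = (Sm ** T (of_int (int m) * phi) ** Sp ** T (of_int 2 * phi) ** Sm ** T (of_int 1 * phi) ** Sm) *v vector [1,0]"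
proof -
  have "(Sm ** T (of_int (int m) * phi) ** Sp ** T (of_int 2 * phi) ** Sm ** T (of_int 1 * phi) ** Sm) *v vector [1,0]
      = vector [2*phi*phi - 1, phi + real m * phi * (1 - 2*phi*phi)]"
    by (simp add: T_def Sp_def Sm_def mk_mult mk_mulv algebra_simps)
  also have "2*phi*phi - 1 = 1 + 2*phi" using phi_sq' by algebra
  also have "phi + real m * phi * (1 - 2*phi*phi) = phi - real m * (3*phi + 2)" using phi_sq' by algebra
  finally show ?thesis by simp
qed

lemma A2_word: "A2 i = (Sm ** T (of_int (int (fb (2*i))) * phi) ** Sp ** T (of_int 2 * phi) ** Sm ** T (of_int 1 * phi) ** Sm) *v vector [1,0]"
  unfolding A2_def by (rule A2_word_gen)

lemma fb_shift: "(2*phi - 1) * real (fb (2*i + c)) = phi^c * phi^(2*i) - psi^c * Q i"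
  using fb_closed[of "2*i+c"] by (simp add: Q_def power_add mult.commute)

lemma two_phi_ne: "2*phi - 1 \<noteq> 0" using phi_gt1 by simp

lemma A1_rel: "A1 i = A0 i + vector [phi - 1, (phi - 1) * Q i]"
proof -
  define P where "P = phi^(2*i)"
  have f3: "(2*phi - 1) * real (fb (2*i + 3)) = phi^3 * P - psi^3 * Q i" using fb_shift P_def by (simp only:)
  have f2: "(2*phi - 1) * real (fb (2*i + 2)) = phi^2 * P - psi^2 * Q i" using fb_shift P_def by (simp only:)
  have "(2*phi - 1) * (phi - real (fb (2*i+2)) * (phi + 1)) = (2*phi - 1) * ((1 - real (fb (2*i+3))) * phi + (phi - 1) * Q i)"
    using f2 f3 phi_sq' unfolding psi_def by algebra
  then have "phi - real (fb (2*i+2)) * (phi + 1) = (1 - real (fb (2*i+3))) * phi + (phi - 1) * Q i"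
    using two_phi_ne by simp
  then show ?thesis by (simp add: A0_def A1_def vec_eq_iff forall_2)
qed

lemma A2_rel: "A2 i = A0 i + vector [2*phi, 2*phi * Q i]"
proof -
  define P where "P = phi^(2*i)"
  have f3: "(2*phi - 1) * real (fb (2*i + 3)) = phi^3 * P - psi^3 * Q i" using fb_shift P_def by (simp only:)
  have f0: "(2*phi - 1) * real (fb (2*i)) = P - Q i" using fb_shift[of i 0] P_def by simp
  have "(2*phi - 1) * (phi - real (fb (2*i)) * (3*phi + 2)) = (2*phi - 1) * ((1 - real (fb (2*i+3))) * phi + 2*phi * Q i)"
    using f0 f3 phi_sq' unfolding psi_def by algebra
  then have "phi - real (fb (2*i)) * (3*phi + 2) = (1 - real (fb (2*i+3))) * phi + 2*phi * Q i"
    using two_phi_ne by simp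
  then show ?thesis by (simp add: A0_def A2_def vec_eq_iff forall_2)
qed

lemma N_pos: "N i > 0" using phi_gt1 by (simp add: N_def)

lemma Wp_dir: "Wp i 1 *v (A0 i + vector [t, t * Q i]) = Wp i 1 *v A0 i + vector [t / N i, 0]"
proof -
  define M where "M = Wp i 1"
  have k: "M *v vector [N i, N i * Q i] = vector [1, 0]" using Wp_key[of 1 i] by (simp add: M_def)
  then have k1: "M$1$1 * N i + M$1$2 * (N i * Q i) = 1" and k2: "M$2$1 * N i + M$2$2 * (N i * Q i) = 0"
    by (simp_all add: gen_mulv vec_eq_iff forall_2)
  have n: "N i \<noteq> 0" using N_pos[of i] by simp
  have h1: "M$1$1 * t + M$1$2 * (t * Q i) = t / N i"
  proof -
    have "(M$1$1 * t + M$1$2 * (t * Q i)) * N i = t * (M$1$1 * N i + M$1$2 * (N i * Q i))" by (simp add: algebra_simps)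
    also have "\<dots> = t" using k1 by simp
    finally show ?thesis using n by (simp add: eq_divide_eq)
  qed
  have h2: "M$2$1 * t + M$2$2 * (t * Q i) = 0"
  proof -
    have "(M$2$1 * t + M$2$2 * (t * Q i)) * N i = t * (M$2$1 * N i + M$2$2 * (N i * Q i))" by (simp add: algebra_simps)
    then show ?thesis using k2 n by simp
  qed
  have "M *v (A0 i + vector [t, t * Q i]) = M *v A0 i + M *v vector [t, t * Q i]"
    by (simp add: matrix_vector_right_distrib)
  also have "M *v vector [t, t * Q i] = vector [t / N i, 0]" using h1 h2 by (simp add: gen_mulv)
  finally show ?thesis by (simp add: M_def)
qed

lemma vec2_eta: "vector [z$1, z$2] = (z::real^2)"
  by (simp add: vec_eq_iff forall_2)

lemma abs_s: assumes "s * s = (1::real)" shows "\<bar>s\<bar> = 1"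
proof -
  have "(s - 1) * (s + 1) = 0" using assms by algebra
  then have "s = 1 \<or> s = -1" by auto
  then show ?thesis by auto
qed

lemma norm2_le: "norm (z::real^2) \<le> \<bar>z$1\<bar> + \<bar>z$2\<bar>"
  using norm_le_l1_cart[of z] by (simp add: sum_2)

lemma norm_T: "norm (T t *v z) \<le> (2 + \<bar>t\<bar>) * norm z"
proof -
  have "T t *v z = vector [z$1 + t * z$2, z$2]" using T_mulv[of t "z$1" "z$2"] unfolding vec2_eta .
  then have "norm (T t *v z) \<le> \<bar>z$1 + t * z$2\<bar> + \<bar>z$2\<bar>" using norm2_le[of "T t *v z"] by simp
  also have "\<dots> \<le> \<bar>z$1\<bar> + \<bar>t\<bar> * \<bar>z$2\<bar> + \<bar>z$2\<bar>"
    using abs_triangle_ineq[of "z$1" "t * z$2"] by (simp add: abs_mult)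
  also have "\<dots> \<le> norm z + \<bar>t\<bar> * norm z + norm z"
  proof -
    have a: "\<bar>z$1\<bar> \<le> norm z" and b: "\<bar>z$2\<bar> \<le> norm z" using component_le_norm_cart by auto
    have c: "\<bar>t\<bar> * \<bar>z$2\<bar> \<le> \<bar>t\<bar> * norm z" by (rule mult_left_mono[OF b]) simp
    show ?thesis using a b c by linarith
  qed
  finally show ?thesis by (simp add: algebra_simps)
qed

lemma norm_mkS: "s * s = 1 \<Longrightarrow> norm (mk 0 s (-s) 0 *v z) \<le> 2 * norm z"
proof -
  assume ss: "s * s = 1"
  then have as: "\<bar>s\<bar> = 1" using abs_s by blast
  have "mk 0 s (-s) 0 *v z = vector [0 * z$1 + s * z$2, - s * z$1 + 0 * z$2]" using mk_mulv[of 0 s "-s" 0 "z$1" "z$2"] unfolding vec2_eta .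
  then have "mk 0 s (-s) 0 *v z = vector [s * z$2, - s * z$1]" by simp
  then have "norm (mk 0 s (-s) 0 *v z) \<le> \<bar>s * z$2\<bar> + \<bar>- s * z$1\<bar>" using norm2_le[of "mk 0 s (-s) 0 *v z"] by simp
  also have "\<dots> = \<bar>z$2\<bar> + \<bar>z$1\<bar>" using as by (simp add: abs_mult)
  also have "\<dots> \<le> 2 * norm z" using component_le_norm_cart[of z 1] component_le_norm_cart[of z 2] by simp
  finally show ?thesis .
qed

fun K :: "nat \<Rightarrow> real" where
  "K 0 = 4 * (2 + phi)^2"
| "K (Suc i) = K i * 2 * (2 + real (luc (2*i+1)) * phi)"

lemma K_nonneg: "K i \<ge> 0"
  using phi_gt1 by (induction i) auto

lemma Wp_norm: "s * s = 1 \<Longrightarrow> norm (Wp i s *v z) \<le> K i * norm z"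
proof (induction i arbitrary: s z)
  case 0
  have as: "\<bar>s\<bar> = 1" using 0 using abs_s by blast
  have Tb: "norm (T (-s*phi) *v w) \<le> (2 + phi) * norm w" for w
    using norm_T[of "-s*phi" w] as phi_gt1 by (simp add: abs_mult)
  have "Wp 0 s *v z = mk 0 s (-s) 0 *v (T (-s*phi) *v (mk 0 s (-s) 0 *v (T (-s*phi) *v z)))"
    by (simp add: matrix_vector_mul_assoc matrix_mul_assoc)
  also have "norm \<dots> \<le> 2 * norm (T (-s*phi) *v (mk 0 s (-s) 0 *v (T (-s*phi) *v z)))" by (rule norm_mkS[OF 0])
  also have "\<dots> \<le> 2 * ((2 + phi) * norm (mk 0 s (-s) 0 *v (T (-s*phi) *v z)))" using Tb by simp
  also have "\<dots> \<le> 2 * ((2 + phi) * (2 * norm (T (-s*phi) *v z)))"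
    using norm_mkS[OF 0] phi_gt1 by (simp add: mult_left_mono)
  also have "\<dots> \<le> 2 * ((2 + phi) * (2 * ((2 + phi) * norm z)))"
    using Tb phi_gt1 by (simp add: mult_left_mono)
  also have "\<dots> = K 0 * norm z" by (simp add: power2_eq_square)
  finally show ?case .
next
  case (Suc i)
  have as: "\<bar>s\<bar> = 1" using Suc.prems using abs_s by blast
  have ss: "(-s) * (-s) = 1" using Suc.prems by simp
  let ?t = "-s * real (luc (2*i+1)) * phi"
  have at: "\<bar>?t\<bar> = real (luc (2*i+1)) * phi" using as phi_gt1 by (simp add: abs_mult)
  have "Wp (Suc i) s *v z = Wp i (-s) *v (mk 0 s (-s) 0 *v (T ?t *v z))"
    by (simp add: matrix_vector_mul_assoc matrix_mul_assoc)
  also have "norm \<dots> \<le> K i * norm (mk 0 s (-s) 0 *v (T ?t *v z))" by (rule Suc.IH[OF ss])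
  also have "\<dots> \<le> K i * (2 * norm (T ?t *v z))" using norm_mkS[OF Suc.prems] K_nonneg by (simp add: mult_left_mono)
  also have "\<dots> \<le> K i * (2 * ((2 + \<bar>?t\<bar>) * norm z))" using norm_T[of ?t z] K_nonneg by (simp add: mult_left_mono)
  also have "\<dots> = K (Suc i) * norm z" using at by simp
  finally show ?case .
qed

lemma psi_neg: "psi < 0" using phi_gt1 unfolding psi_def by simp

lemma Q_pos: "Q i > 0"
proof -
  have "Q i = (psi*psi)^i" by (simp add: Q_def power_mult power2_eq_square)
  moreover have "psi * psi > 0" using psi_neg by (simp add: mult_neg_neg)
  ultimately show ?thesis by simp
qed

lemma K_bound: "K i \<le> K 0 * phi^(i*i + 4*i)"
proof (induction i)
  case 0 then show ?case by simp
next
  case (Suc i)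
  define P where "P = phi^(2*i)"
  have P1: "P \<ge> 1" using phi_gt1 by (simp add: P_def)
  have ng: "psi * Q i < 0" by (rule mult_neg_pos[OF psi_neg Q_pos])
  have L: "real (luc (2*i+1)) \<le> phi * P"
    using luc_odd[of i] ng unfolding P_def by linarith
  have Lm: "real (luc (2*i+1)) * phi \<le> phi * P * phi"
    by (rule mult_right_mono[OF L]) (use phi_gt1 in simp)
  have "2 * (2 + real (luc (2*i+1)) * phi) \<le> 2 * (2 + phi * P * phi)"
    by (intro mult_left_mono add_left_mono Lm) simp
  also have "\<dots> \<le> (6 + 2 * phi) * P"
  proof -
    have "(6 + 2 * phi) * P - 2 * (2 + phi * P * phi) = 4 * (P - 1)" using phi_sq' by algebra
    moreover have "0 \<le> 4 * (P - 1)" using P1 by simp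
    ultimately have "0 \<le> (6 + 2 * phi) * P - 2 * (2 + phi * P * phi)" by simp
    then show ?thesis by (simp only: diff_ge_0_iff_ge)
  qed
  also have "\<dots> \<le> phi^5 * P"
  proof -
    have p5: "phi^5 = phi*phi*phi*phi*phi" by (simp add: numeral_eq_Suc)
    have "phi*phi*phi*phi*phi = 5*phi + 3" using phi_sq' by algebra
    then have "phi^5 = 5*phi + 3" using p5 by simp
    then show ?thesis using phi_gt1 P1 by (intro mult_right_mono) auto
  qed
  finally have f: "2 * (2 + real (luc (2*i+1)) * phi) \<le> phi^5 * P" .
  have "K (Suc i) = K i * (2 * (2 + real (luc (2*i+1)) * phi))" by simp
  also have "\<dots> \<le> (K 0 * phi^(i*i + 4*i)) * (phi^5 * P)"
  proof (rule mult_mono[OF Suc.IH f])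
    show "0 \<le> K 0 * phi ^ (i * i + 4 * i)" using K_nonneg[of 0] phi_gt1 by simp
    show "0 \<le> 2 * (2 + real (luc (2 * i + 1)) * phi)" using phi_gt1 by simp
  qed
  also have "\<dots> = K 0 * phi^(Suc i * Suc i + 4 * Suc i)"
  proof -
    have "Suc i * Suc i + 4 * Suc i = (i*i + 4*i) + 5 + 2*i" by simp
    then have "phi^(Suc i * Suc i + 4 * Suc i) = phi^(i*i + 4*i) * phi^5 * P"
      unfolding P_def by (simp only: power_add)
    then show ?thesis by (simp only: mult.assoc)
  qed
  finally show ?case .
qed

lemma fb_le: "real (fb n) \<le> phi^n"
proof (induction n rule: fb.induct)
  case 1 then show ?case by simp
next
  case 2 then show ?case using phi_gt1 by simp
next
  case (3 n)
  have "real (fb (Suc (Suc n))) = real (fb n) + real (fb (Suc n))" by (simp add: fb.simps(3))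
  also have "\<dots> \<le> phi^n + phi^(Suc n)" using 3 by simp
  also have "\<dots> = phi^(Suc (Suc n))"
  proof -
    have "phi^(Suc (Suc n)) = phi^n * (phi*phi)" by (simp add: algebra_simps)
    then show ?thesis using phi_sq' by (simp add: algebra_simps)
  qed
  finally show ?case .
qed

lemma fb_pos: "fb (Suc n) \<ge> 1"
proof (induction n)
  case 0 then show ?case by simp
next
  case (Suc n) then show ?case by (simp add: fb.simps(3))
qed

lemma axis11: "(axis 1 1 :: real^2) = vector [1, 0]"
  by (simp add: vec_eq_iff forall_2 axis_def)

lemma N_eq: "N n = phi^(n*n+n) * phi" by (simp add: N_def)

lemma eps_form: "2 * phi / N n = 2 / phi^(n*n+n)"
  using phi_gt1 by (simp add: N_eq)

lemma vec_add2: "vector [a, b] + vector [c, d] = (vector [a + c, b + d] :: real^2)"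
  by (simp add: vec_eq_iff forall_2)

lemma exp_ineq: "n*n + 6*n \<le> (n*n+n)*(4::nat)"
proof -
  have a: "n \<le> n*n" by (cases n) auto
  have b: "(n*n+n)*(4::nat) = 4*(n*n) + 4*n" by simp
  show ?thesis unfolding b using a by linarith
qed

lemma main_n:
  fixes n :: nat
  defines "eps \<equiv> 2 * phi / N n"
  defines "C \<equiv> 16 * (2 * K 0 * phi^4 + 3)"
  shows "\<exists>p q r. p \<in> orbitS \<and> q \<in> orbitS \<and> r \<in> orbitS \<and>
        p \<noteq> q \<and> p \<noteq> r \<and> q \<noteq> r \<and>
        (\<exists>a::real^2. {p, q, r} \<subseteq> closed_segment a (a + eps *\<^sub>R axis 1 1)) \<and>
        {p, q, r} \<subseteq> ball 0 (C * eps powr (-4))"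
proof -
  define M where "M = Wp n 1"
  have MG: "M \<in> Gamma" unfolding M_def by (rule Wp_in) simp
  define p where "p = M *v A0 n"
  define d1 where "d1 = (phi - 1) / N n"
  define q where "q = p + vector [d1, 0]"
  define r where "r = p + vector [eps, 0]"
  have Npos: "N n > 0" by (rule N_pos)
  have phi1: "phi > 1" by (rule phi_gt1)
  have q_eq: "q = M *v A1 n"
    unfolding q_def p_def M_def d1_def A1_rel by (rule Wp_dir[symmetric])
  have r_eq: "r = M *v A2 n"
    unfolding r_def p_def M_def eps_def A2_rel by (rule Wp_dir[symmetric])
  have inS: "G \<in> Gamma \<Longrightarrow> G *v vector [1,0] \<in> orbitS" for G
    unfolding orbitS_def by blast
  have pS: "p \<in> orbitS"
  proof -
    have "p = (M ** Lo (of_int (1 - int (fb (2*n+3))) * phi)) *v vector [1,0]"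
      unfolding p_def A0_word by (simp add: matrix_vector_mul_assoc)
    moreover have "M ** Lo (of_int (1 - int (fb (2*n+3))) * phi) \<in> Gamma"
      by (intro Gamma_mult MG Lo_in)
    ultimately show ?thesis using inS by simp
  qed
  have qS: "q \<in> orbitS"
  proof -
    have "q = (M ** (Sp ** T (of_int (int (fb (2*n+2)) - 1) * phi) ** Lo phi)) *v vector [1,0]"
      unfolding q_eq A1_word by (simp add: matrix_vector_mul_assoc)
    moreover have "Lo phi \<in> Gamma" using Lo_in[of 1] by simp
    then have "M ** (Sp ** T (of_int (int (fb (2*n+2)) - 1) * phi) ** Lo phi) \<in> Gamma"
      by (intro Gamma_mult MG Sp_in T_in)
    ultimately show ?thesis using inS by simp
  qed
  have rS: "r \<in> orbitS"
  proof -
    have "r = (M ** (Sm ** T (of_int (int (fb (2*n))) * phi) ** Sp ** T (of_int 2 * phi) ** Sm ** T (of_int 1 * phi) ** Sm)) *v vector [1,0]"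
      unfolding r_eq A2_word by (simp add: matrix_vector_mul_assoc)
    moreover have "M ** (Sm ** T (of_int (int (fb (2*n))) * phi) ** Sp ** T (of_int 2 * phi) ** Sm ** T (of_int 1 * phi) ** Sm) \<in> Gamma"
      by (intro Gamma_mult MG Sp_in Sm_in T_in)
    ultimately show ?thesis using inS by simp
  qed
  have d1pos: "d1 > 0" unfolding d1_def using Npos phi1 by simp
  have epspos: "eps > 0" unfolding eps_def using Npos phi1 by simp
  have d1eps: "d1 < eps" unfolding d1_def eps_def using Npos phi1 by (simp add: divide_strict_right_mono)
  have Nge: "N n \<ge> phi"
  proof -
    have "phi^1 \<le> phi^(n*n+n+1)" using phi1 by (intro power_increasing) auto
    then show ?thesis by (simp add: N_def)
  qed
  have eps2: "eps \<le> 2"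
  proof -
    have "2 * phi \<le> 2 * N n" using Nge by simp
    then show ?thesis unfolding eps_def using Npos by (simp add: divide_le_eq)
  qed
  have pq: "p \<noteq> q"
  proof
    assume "p = q"
    then have "vector [d1, 0] = (0::real^2)" unfolding q_def by simp
    then have "(vector [d1, 0] :: real^2) $ 1 = 0" by simp
    then show False using d1pos by simp
  qed
  have pr: "p \<noteq> r"
  proof
    assume "p = r"
    then have "vector [eps, 0] = (0::real^2)" unfolding r_def by simp
    then have "(vector [eps, 0] :: real^2) $ 1 = 0" by simp
    then show False using epspos by simp
  qed
  have qr: "q \<noteq> r"
  proof
    assume "q = r"
    then have "vector [d1, 0] = (vector [eps, 0] :: real^2)" unfolding q_def r_def by simp
    then have "(vector [d1, 0] :: real^2) $ 1 = (vector [eps, 0] :: real^2) $ 1" by simp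
    then show False using d1eps by simp
  qed
  have seg: "{p, q, r} \<subseteq> closed_segment p (p + eps *\<^sub>R axis 1 1)"
  proof -
    have rr: "p + eps *\<^sub>R axis 1 1 = r"
      unfolding r_def axis11 by (simp add: vec_eq_iff forall_2)
    have "q \<in> closed_segment p r"
      unfolding in_segment
    proof (intro exI conjI)
      show "0 \<le> d1 / eps" using d1pos epspos by simp
      show "d1 / eps \<le> 1" using d1eps epspos by simp
      show "q = (1 - d1 / eps) *\<^sub>R p + (d1 / eps) *\<^sub>R r"
        unfolding q_def r_def using epspos
        by (simp add: vec_eq_iff forall_2 algebra_simps)
    qed
    then show ?thesis unfolding rr by simp
  qed
  define X where "X = phi^((n*n+n)*4)"
  have X1: "X \<ge> 1" unfolding X_def using phi1 by simp
  have epsX: "eps powr (-4) = X / 16"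
  proof -
    have e: "eps = 2 / phi^(n*n+n)" unfolding eps_def by (rule eps_form)
    have "eps powr (-4) = inverse (eps ^ 4)" using epspos by (simp add: powr_minus)
    also have "\<dots> = (phi^(n*n+n))^4 / 16" unfolding e by (simp add: field_simps)
    also have "(phi^(n*n+n))^4 = X" unfolding X_def by (rule power_mult[symmetric])
    finally show ?thesis .
  qed
  have F1: "real (fb (2*n+3)) \<ge> 1"
  proof -
    have a: "fb (Suc (2*n+2)) \<ge> 1" by (rule fb_pos)
    have b: "Suc (2*n+2) = 2*n+3" by simp
    have "fb (2*n+3) \<ge> 1" using a unfolding b .
    then show ?thesis by simp
  qed
  have A0n: "norm (A0 n) \<le> 2 * phi^(2*n+4)"
  proof -
    have "norm (A0 n) \<le> \<bar>1\<bar> + \<bar>(1 - real (fb (2*n+3))) * phi\<bar>"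
      using norm2_le[of "A0 n"] by (simp add: A0_def)
    also have "\<bar>(1 - real (fb (2*n+3))) * phi\<bar> = (real (fb (2*n+3)) - 1) * phi"
      using F1 phi1 by (simp add: abs_mult)
    also have "\<dots> \<le> real (fb (2*n+3)) * phi" using phi1 by simp
    also have "\<dots> \<le> phi^(2*n+3) * phi" using fb_le[of "2*n+3"] phi1 by simp
    also have "phi^(2*n+3) * phi = phi^(2*n+4)"
    proof -
      have "2*n+4 = Suc (2*n+3)" by simp
      then show ?thesis by (simp only: power_Suc mult.commute)
    qed
    finally have "norm (A0 n) \<le> 1 + phi^(2*n+4)" by simp
    moreover have "1 \<le> phi^(2*n+4)" using phi1 by simp
    ultimately show ?thesis by simp
  qed
  have pn: "norm p \<le> 2 * K 0 * phi^4 * X"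
  proof -
    have "norm p \<le> K n * norm (A0 n)" unfolding p_def M_def by (rule Wp_norm) simp
    also have "\<dots> \<le> (K 0 * phi^(n*n + 4*n)) * (2 * phi^(2*n+4))"
      using K_bound[of n] A0n K_nonneg[of n] by (intro mult_mono) auto
    also have "\<dots> = 2 * K 0 * phi^4 * phi^(n*n + 6*n)"
    proof -
      have "n*n + 4*n + (2*n+4) = (n*n + 6*n) + 4" by simp
      then have "phi^(n*n + 4*n) * phi^(2*n+4) = phi^(n*n + 6*n) * phi^4" by (metis power_add)
      then show ?thesis by (simp add: algebra_simps)
    qed
    also have "\<dots> \<le> 2 * K 0 * phi^4 * X"
    proof -
      have "phi^(n*n + 6*n) \<le> X" unfolding X_def using phi1 exp_ineq[of n] by (intro power_increasing) auto
      moreover have "0 \<le> 2 * K 0 * phi^4" using K_nonneg[of 0] phi1 by simp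
      ultimately show ?thesis by (intro mult_left_mono)
    qed
    finally show ?thesis .
  qed
  have bound: "norm p + 2 < C * eps powr (-4)"
  proof -
    have "C * eps powr (-4) = (2 * K 0 * phi^4 + 3) * X" unfolding epsX C_def by simp
    also have "\<dots> = 2 * K 0 * phi^4 * X + 3 * X" by (simp add: algebra_simps)
    finally show ?thesis using pn X1 by linarith
  qed
  have nq: "norm q \<le> norm p + 2"
  proof -
    have "norm q \<le> norm p + norm (vector [d1, 0] :: real^2)" unfolding q_def by (rule norm_triangle_ineq)
    also have "norm (vector [d1, 0] :: real^2) \<le> \<bar>d1\<bar> + \<bar>0\<bar>" using norm2_le[of "vector [d1, 0]"] by simp
    finally show ?thesis using d1pos d1eps eps2 by simp
  qed
  have nr: "norm r \<le> norm p + 2"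
  proof -
    have "norm r \<le> norm p + norm (vector [eps, 0] :: real^2)" unfolding r_def by (rule norm_triangle_ineq)
    also have "norm (vector [eps, 0] :: real^2) \<le> \<bar>eps\<bar> + \<bar>0\<bar>" using norm2_le[of "vector [eps, 0]"] by simp
    finally show ?thesis using epspos eps2 by simp
  qed
  have ball: "{p, q, r} \<subseteq> ball 0 (C * eps powr (-4))"
    using bound nq nr by (simp add: dist_norm)
  show ?thesis
    using pS qS rS pq pr qr seg ball by blast
qed

theorem theorem1p6:
  shows "\<exists>(\<epsilon>::nat \<Rightarrow> real) (C::real). C > 0 \<and> (\<forall>n. \<epsilon> n > 0) \<and> \<epsilon> \<longlonglongrightarrow> 0 \<and>
    (\<forall>n. \<exists>p q r. p \<in> orbitS \<and> q \<in> orbitS \<and> r \<in> orbitS \<and>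
        p \<noteq> q \<and> p \<noteq> r \<and> q \<noteq> r \<and>
        (\<exists>a::real^2. {p, q, r} \<subseteq> closed_segment a (a + \<epsilon> n *\<^sub>R axis 1 1)) \<and>
        {p, q, r} \<subseteq> ball 0 (C * \<epsilon> n powr (-4)))"
proof -
  define e where "e = (\<lambda>n. 2 * phi / N n)"
  define C where "C = 16 * (2 * K 0 * phi^4 + 3)"
  have phi1: "phi > 1" by (rule phi_gt1)
  have c1: "C > 0" unfolding C_def using K_nonneg[of 0] phi1 by (simp add: add_nonneg_pos)
  have c2: "\<forall>n. e n > 0" unfolding e_def using N_pos phi1 by simp
  have c3: "e \<longlonglongrightarrow> 0" unfolding e_def
  proof (rule real_tendsto_sandwich[of "\<lambda>_. 0" _ _ "\<lambda>n. 2 * (inverse phi)^n"])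
    show "\<forall>\<^sub>F n in sequentially. 0 \<le> (2 * phi / N n)" using N_pos phi1 by (simp add: less_imp_le)
    show "\<forall>\<^sub>F n in sequentially. (2 * phi / N n) \<le> 2 * (inverse phi)^n"
    proof (rule always_eventually, rule allI)
      fix n
      have "phi^n \<le> phi^(n*n+n)" using phi1 by (intro power_increasing) auto
      then have "2 / phi^(n*n+n) \<le> 2 / phi^n" using phi1 by (intro divide_left_mono) auto
      moreover have "(2 * phi / N n) = 2 / phi^(n*n+n)" by (rule eps_form)
      moreover have "2 * (inverse phi)^n = 2 / phi^n" by (simp add: power_inverse divide_inverse)
      ultimately show "(2 * phi / N n) \<le> 2 * (inverse phi)^n" by simp
    qed
    show "(\<lambda>_. 0) \<longlonglongrightarrow> (0::real)" by simp
    have "(\<lambda>n. (inverse phi)^n) \<longlonglongrightarrow> 0" using phi1 by (intro LIMSEQ_power_zero) (simp add: inverse_less_1_iff)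
    then show "(\<lambda>n. 2 * (inverse phi)^n) \<longlonglongrightarrow> 0" using tendsto_mult_right_zero by blast
  qed
  have c4: "\<forall>n. \<exists>p q r. p \<in> orbitS \<and> q \<in> orbitS \<and> r \<in> orbitS \<and>
        p \<noteq> q \<and> p \<noteq> r \<and> q \<noteq> r \<and>
        (\<exists>a::real^2. {p, q, r} \<subseteq> closed_segment a (a + e n *\<^sub>R axis 1 1)) \<and>
        {p, q, r} \<subseteq> ball 0 (C * e n powr (-4))"
    unfolding e_def C_def by (intro allI) (rule main_n)
  show ?thesis using c1 c2 c3 c4 by blast
qed

end
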